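(* Let $\alpha>0$, $t_0>0$, $x_0\in\mathcal H$, and let $x:[t_0,+\infty)\to\mathcal H$ be a solution of the Cauchy problem $$\tfrac{\alpha}{t}\dot x(t)+\operatorname{proj}_{C(x(t))+\ddot x(t)}(0)=0\ (t>t_0),\qquad x(t_0)=x_0,\ \dot x(t_0)=0 .$$ Assume that every $f_i$ is bounded from below and that the Assumption on the weak Pareto set in the context holds. Then for every $i=1,\dots,m$ the limit $f_i^\infty=\lim_{t\to\infty}f_i(x(t))$ exists in $\mathbb R$, and $f_i^\infty=\mathcal W_i^\infty$, where $\mathcal W_i^\infty=\lim_{t\to+\infty}\big(f_i(x(t))+\frac12\|\dot x(t)\|^2\big)$.
   Context: $\mathcal H$ is a real Hilbert space. $f_1,\dots,f_m:\mathcal H\to\mathbb R$ are convex and continuously differentiable, and $F=(f_1,\dots,f_m)$. $C(x)=\operatorname{co}\{\nabla f_i(x):i=1,\dots,m\}$. For a closed convex $K$, $\operatorname{proj}_K(y)=\arg\min_{w\in K}\|w-y\|^2$. A solution of the Cauchy problem is a function $x:[t_0,+\infty)\to\mathcal H$ such that: $x\in C^1([t_0,+\infty))$; $\dot x$ is absolutely continuous on $[t_0,T]$ for every $T\ge t_0$; there is a Bochner measurable $\ddot x$ with $\dot x(t)=\dot x(t_0)+\int_{t_0}^t\ddot x(s)\,ds$ for all $t$, and $\frac{d}{dt}\dot x=\ddot x$ a.e.; the equation holds for almost all $t\ge t_0$; and the initial conditions hold. A point $x^*$ is weakly Pareto optimal if there is no $x$ with $f_i(x)<f_i(x^* )$ for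 all $i$; $P_w$ denotes the set of such points. For $\hat F\in\mathbb R^m$, $\mathcal L(\hat F)=\{x:F(x)\le\hat F\}$ and $P_w(\hat F)=P_w\cap\mathcal L(\hat F)$. Assumption: for all $x_0\in\mathcal H$ and all $x\in\mathcal L(F(x_0))$ there exists $x^*\in P_w(F(x))$, and $$R:=\sup_{F^*\in F(P_w(F(x_0)))}\ \inf_{x\in F^{-1}(F^* )}\tfrac12\|x-x_0\|^2<+\infty .$$ *)

theory Defs
  imports "HOL-Analysis.Analysis"
begin

definition proj :: "'a::real_inner set \<Rightarrow> 'a \<Rightarrow> 'a" where
  "proj K y = (SOME w. w \<in> K \<and> (\<forall>v\<in>K. norm (w - y) ^ 2 \<le> norm (v - y) ^ 2))"

definition abs_continuous_on :: "real \<Rightarrow> real \<Rightarrow> (real \<Rightarrow> 'a::real_normed_vector) \<Rightarrow> bool" where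
  "abs_continuous_on a b g \<longleftrightarrow>
     (\<forall>\<epsilon>>0. \<exists>\<delta>>0. \<forall>(n::nat) (u::nat \<Rightarrow> real) v.
        (\<forall>k<n. a \<le> u k \<and> u k \<le> v k \<and> v k \<le> b) \<and>
        (\<forall>k<n. \<forall>j<n. j \<noteq> k \<longrightarrow> v k \<le> u j \<or> v j \<le> u k) \<and>
        (\<Sum>k<n. v k - u k) < \<delta>
        \<longrightarrow> (\<Sum>k<n. norm (g (v k) - g (u k))) < \<epsilon>)"

text \<open>Bochner (strong) measurability on a set S of reals, in the Pettis form:
  Borel measurable and almost everywhere separably valued.\<close>
definition strongly_measurable_on :: "real set \<Rightarrow> (real \<Rightarrow> 'a::real_normed_vector) \<Rightarrow> bool" where
  "strongly_measurable_on S g \<longleftrightarrow>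
     g \<in> borel_measurable (restrict_space lebesgue S) \<and>
     (\<exists>D. countable D \<and> (AE t in lebesgue. t \<in> S \<longrightarrow> g t \<in> closure D))"

definition Cset :: "nat \<Rightarrow> (nat \<Rightarrow> 'a \<Rightarrow> 'a::real_inner) \<Rightarrow> 'a \<Rightarrow> 'a set" where
  "Cset m g z = convex hull {g i z | i. i \<in> {1..m}}"

definition weakly_pareto :: "nat \<Rightarrow> (nat \<Rightarrow> 'a \<Rightarrow> real) \<Rightarrow> 'a \<Rightarrow> bool" where
  "weakly_pareto m f xs \<longleftrightarrow> \<not> (\<exists>y. \<forall>i\<in>{1..m}. f i y < f i xs)"

definition level_set :: "nat \<Rightarrow> (nat \<Rightarrow> 'a \<Rightarrow> real) \<Rightarrow> (nat \<Rightarrow> real) \<Rightarrow> 'a set" where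
  "level_set m f Fh = {z. \<forall>i\<in>{1..m}. f i z \<le> Fh i}"

definition Pw_level :: "nat \<Rightarrow> (nat \<Rightarrow> 'a \<Rightarrow> real) \<Rightarrow> (nat \<Rightarrow> real) \<Rightarrow> 'a set" where
  "Pw_level m f Fh = {z. weakly_pareto m f z} \<inter> level_set m f Fh"

end

theory Submission
  imports Defs
begin


lemma has_integral_sub_from:
  fixes U :: "real \<Rightarrow> 'a::banach"
  assumes "\<And>\<tau>. \<tau> \<in> {s..t} \<Longrightarrow> (U has_integral (u \<tau> - u s)) {s..\<tau>}"
    and "s \<le> a" "a \<le> b" "b \<le> t"
  shows "(U has_integral (u b - u a)) {a..b}"
proof -
  have ib: "(U has_integral (u b - u s)) {s..b}" using assms by auto
  have ia: "(U has_integral (u a - u s)) {s..a}" using assms by auto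
  have "U integrable_on {a..b}"
    using integrable_subinterval_real[OF has_integral_integrable[OF ib]] assms by auto
  then obtain y where y: "(U has_integral y) {a..b}" by blast
  from has_integral_combine[OF \<open>s\<le>a\<close> \<open>a\<le>b\<close> ia y]
  have "(U has_integral (u a - u s) + y) {s..b}" .
  with ib have "u b - u s = u a - u s + y" using has_integral_unique by blast
  hence "y = u b - u a" by (simp add: algebra_simps)
  with y show ?thesis by simp
qed

lemma has_integral_le_negl:
  fixes f g :: "real \<Rightarrow> real"
  assumes "(f has_integral i) S" "(g has_integral j) S" "negligible N"
    "\<And>r. r \<in> S \<Longrightarrow> r \<notin> N \<Longrightarrow> f r \<le> g r"
  shows "i \<le> j"
proof -
  let ?f = "\<lambda>r. if r \<in> N then g r else f r"
  have "(?f has_integral i) S" by (rule has_integral_spike[OF assms(3) _ assms(1)]) auto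
  then show ?thesis by (rule has_integral_le[OF _ assms(2)]) (use assms(4) in auto)
qed

lemma chain_le:
  fixes D M :: "real \<Rightarrow> real"
  assumes st: "s \<le> t" and Mmono: "\<And>a b. s \<le> a \<Longrightarrow> a \<le> b \<Longrightarrow> b \<le> t \<Longrightarrow> M a \<le> M b"
    and loc: "\<And>\<epsilon>. \<epsilon> > 0 \<Longrightarrow> \<exists>\<delta>>0. \<forall>a b. s \<le> a \<longrightarrow> a \<le> b \<longrightarrow> b \<le> t \<longrightarrow> b - a < \<delta>
                 \<longrightarrow> D b - D a \<le> \<epsilon> * (M b - M a)"
  shows "D t \<le> D s"
proof -
  have key: "D t - D s \<le> \<epsilon> * (M t - M s)" if eps: "\<epsilon> > 0" for \<epsilon>
  proof -
    obtain \<delta> where \<delta>: "\<delta> > 0" "\<forall>a b. s \<le> a \<longrightarrow> a \<le> b \<longrightarrow> b \<le> t \<longrightarrow> b - a < \<delta>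
                 \<longrightarrow> D b - D a \<le> \<epsilon> * (M b - M a)" using loc[OF eps] by blast
    obtain n :: nat where n: "(t - s) / \<delta> < n" using reals_Archimedean2 by blast
    have "(t - s) / \<delta> \<ge> 0" using st \<delta> by simp
    with n have npos: "n > 0" by (cases n) auto
    define hh where "hh = (t - s) / n"
    have hh0: "hh \<ge> 0" using st npos by (simp add: hh_def)
    have "t - s < \<delta> * n" using n \<delta>(1) by (simp add: divide_less_eq mult.commute)
    hence hhd: "hh < \<delta>" using npos by (simp add: hh_def divide_less_eq mult.commute)
    have nh: "n * hh = t - s" using npos by (simp add: hh_def)
    have "k \<le> n \<Longrightarrow> D (s + k*hh) - D s \<le> \<epsilon> * (M (s + k*hh) - M s)" for k
    proof (induction k)
      case 0 then show ?case by simp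
    next
      case (Suc k)
      let ?a = "s + k*hh" and ?b = "s + (Suc k)*hh"
      have "real (Suc k) * hh \<le> n * hh" using Suc.prems hh0 by (intro mult_right_mono) auto
      hence b: "?b \<le> t" using nh by simp
      have a: "s \<le> ?a" "?a \<le> ?b" "?b - ?a < \<delta>" using hh0 hhd by (auto simp: algebra_simps)
      have "D ?b - D ?a \<le> \<epsilon> * (M ?b - M ?a)" using \<delta>(2) a b by blast
      with Suc.IH Suc.prems show ?case by (simp add: algebra_simps)
    qed
    from this[of n] show ?thesis using nh by simp
  qed
  have M: "M s \<le> M t" using Mmono st by auto
  show ?thesis
  proof (rule ccontr)
    assume "\<not> ?thesis"
    hence pos: "D t - D s > 0" by simp
    define \<epsilon> where "\<epsilon> = (D t - D s) / (M t - M s + 1)"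
    have "\<epsilon> > 0" using pos M by (simp add: \<epsilon>_def)
    from key[OF this] have "D t - D s \<le> \<epsilon> * (M t - M s)" .
    also have "\<dots> < \<epsilon> * (M t - M s + 1)" using \<open>\<epsilon> > 0\<close> by simp
    also have "\<dots> = D t - D s" using M by (simp add: \<epsilon>_def)
    finally show False by simp
  qed
qed


lemma prod_ineq:
  fixes u v U V :: "real \<Rightarrow> 'a::{real_inner,complete_space}"
    and e E q :: "real \<Rightarrow> real"
  assumes st: "s \<le> t"
    and uc: "continuous_on {s..t} u" and vc: "continuous_on {s..t} v"
    and Ui: "\<And>a b w. s \<le> a \<Longrightarrow> a \<le> b \<Longrightarrow> b \<le> t \<Longrightarrow> ((\<lambda>r. U r \<bullet> w) has_integral ((u b - u a) \<bullet> w)) {a..b}"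
    and Vi: "\<And>a b w. s \<le> a \<Longrightarrow> a \<le> b \<Longrightarrow> b \<le> t \<Longrightarrow> ((\<lambda>r. w \<bullet> V r) has_integral (w \<bullet> (v b - v a))) {a..b}"
    and Ei: "\<And>a b. s \<le> a \<Longrightarrow> a \<le> b \<Longrightarrow> b \<le> t \<Longrightarrow> (E has_integral (e b - e a)) {a..b}"
    and Un: "(\<lambda>r. norm (U r)) integrable_on {s..t}"
    and Vn: "(\<lambda>r. norm (V r)) integrable_on {s..t}"
    and qint: "q integrable_on {s..t}"
    and N: "negligible N"
    and pt: "\<And>r. r \<in> {s..t} \<Longrightarrow> r \<notin> N \<Longrightarrow> E r + U r \<bullet> v r + u r \<bullet> V r \<le> q r"
  shows "e t + u t \<bullet> v t - (e s + u s \<bullet> v s) \<le> integral {s..t} q"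
proof -
  define Q where "Q \<tau> = integral {s..\<tau>} q" for \<tau>
  have Qs: "Q s = 0" by (simp add: Q_def)
  have qi: "(q has_integral (Q b - Q a)) {a..b}" if "s \<le> a" "a \<le> b" "b \<le> t" for a b
  proof (rule has_integral_sub_from[where s=s and t=t])
    fix \<tau> assume "\<tau> \<in> {s..t}"
    hence "q integrable_on {s..\<tau>}" using integrable_subinterval_real[OF qint] by auto
    thus "(q has_integral Q \<tau> - Q s) {s..\<tau>}" using Qs by (simp add: Q_def integrable_integral)
  qed (use that in auto)
  define M where "M \<tau> = integral {s..\<tau>} (\<lambda>r. norm (U r) + norm (V r))" for \<tau>
  have Ms: "M s = 0" by (simp add: M_def)
  have UVn: "(\<lambda>r. norm (U r) + norm (V r)) integrable_on {s..t}" using Un Vn by (rule integrable_add)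
  have Mi: "((\<lambda>r. norm (U r) + norm (V r)) has_integral (M b - M a)) {a..b}"
    if "s \<le> a" "a \<le> b" "b \<le> t" for a b
  proof (rule has_integral_sub_from[where s=s and t=t])
    fix \<tau> assume "\<tau> \<in> {s..t}"
    hence "(\<lambda>r. norm (U r) + norm (V r)) integrable_on {s..\<tau>}"
      using integrable_subinterval_real[OF UVn] by auto
    thus "((\<lambda>r. norm (U r) + norm (V r)) has_integral M \<tau> - M s) {s..\<tau>}"
      using Ms by (simp add: M_def integrable_integral)
  qed (use that in auto)
  define D where "D \<tau> = e \<tau> + u \<tau> \<bullet> v \<tau> - Q \<tau>" for \<tau>
  have "D t \<le> D s"
  proof (rule chain_le[OF st])
    fix a b assume ab: "s \<le> a" "a \<le> b" "b \<le> t"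
    show "M a \<le> M b"
      using has_integral_nonneg[OF Mi[OF ab]] by simp
  next
    fix \<epsilon> :: real assume eps: "\<epsilon> > 0"
    have "uniformly_continuous_on {s..t} u" using uc compact_uniformly_continuous by blast
    then obtain du where du: "du > 0" "\<forall>x\<in>{s..t}. \<forall>x'\<in>{s..t}. dist x' x < du \<longrightarrow> dist (u x') (u x) < \<epsilon>"
      using eps unfolding uniformly_continuous_on_def by metis
    have "uniformly_continuous_on {s..t} v" using vc compact_uniformly_continuous by blast
    then obtain dv where dv: "dv > 0" "\<forall>x\<in>{s..t}. \<forall>x'\<in>{s..t}. dist x' x < dv \<longrightarrow> dist (v x') (v x) < \<epsilon>"
      using eps unfolding uniformly_continuous_on_def by metis
    show "\<exists>\<delta>>0. \<forall>a b. s \<le> a \<longrightarrow> a \<le> b \<longrightarrow> b \<le> t \<longrightarrow> b - a < \<delta>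
                 \<longrightarrow> D b - D a \<le> \<epsilon> * (M b - M a)"
    proof (intro exI[of _ "min du dv"] conjI allI impI)
      show "min du dv > 0" using du dv by simp
      fix a b assume ab: "s \<le> a" "a \<le> b" "b \<le> t" "b - a < min du dv"
      have I1: "((\<lambda>r. U r \<bullet> v b) has_integral (u b - u a) \<bullet> v b) {a..b}"
        using Ui[OF ab(1-3)] .
      have I2: "((\<lambda>r. u a \<bullet> V r) has_integral u a \<bullet> (v b - v a)) {a..b}"
        using Vi[OF ab(1-3)] .
      have I: "((\<lambda>r. E r + U r \<bullet> v b + u a \<bullet> V r - q r) has_integral
               (e b - e a + (u b - u a) \<bullet> v b + u a \<bullet> (v b - v a) - (Q b - Q a))) {a..b}"
        by (intro has_integral_diff has_integral_add Ei[OF ab(1-3)] I1 I2 qi[OF ab(1-3)])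
      have J: "((\<lambda>r. \<epsilon> * (norm (U r) + norm (V r))) has_integral \<epsilon> * (M b - M a)) {a..b}"
        using has_integral_mult_right[OF Mi[OF ab(1-3)]] by simp
      have "e b - e a + (u b - u a) \<bullet> v b + u a \<bullet> (v b - v a) - (Q b - Q a) \<le> \<epsilon> * (M b - M a)"
      proof (rule has_integral_le_negl[OF I J N])
        fix r assume r: "r \<in> {a..b}" "r \<notin> N"
        have rst: "r \<in> {s..t}" using r ab by auto
        have "E r + U r \<bullet> v b + u a \<bullet> V r - q r \<le> U r \<bullet> (v b - v r) + (u a - u r) \<bullet> V r"
          using pt[OF rst r(2)] by (simp add: inner_diff_left inner_diff_right)
        also have "\<dots> \<le> norm (U r) * norm (v b - v r) + norm (u a - u r) * norm (V r)"
          by (intro add_mono norm_cauchy_schwarz)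
        also have "\<dots> \<le> norm (U r) * \<epsilon> + \<epsilon> * norm (V r)"
        proof (intro add_mono mult_left_mono mult_right_mono)
          have "dist (v b) (v r) < \<epsilon>" using dv(2) rst ab r by (auto simp: dist_real_def)
          thus "norm (v b - v r) \<le> \<epsilon>" by (simp add: dist_norm)
          have "dist (u a) (u r) < \<epsilon>" using du(2) rst ab r by (auto simp: dist_real_def)
          thus "norm (u a - u r) \<le> \<epsilon>" by (simp add: dist_norm)
        qed auto
        finally show "E r + U r \<bullet> v b + u a \<bullet> V r - q r \<le> \<epsilon> * (norm (U r) + norm (V r))"
          by (simp add: algebra_simps)
      qed
      thus "D b - D a \<le> \<epsilon> * (M b - M a)"
        by (simp add: D_def inner_diff_left inner_diff_right algebra_simps)
    qed
  qed
  moreover have "Q t = integral {s..t} q" by (simp add: Q_def)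
  ultimately show ?thesis using Qs by (simp add: D_def)
qed



lemma proj_char:
  fixes K :: "'a::real_inner set"
  assumes K: "compact K" "convex K" "K \<noteq> {}"
  shows "proj K 0 \<in> K \<and> (\<forall>k\<in>K. proj K 0 \<bullet> (k - proj K 0) \<ge> 0)"
proof -
  have "continuous_on K (\<lambda>v. norm v ^ 2)" by (intro continuous_intros)
  then obtain w0 where "w0 \<in> K" "\<forall>v\<in>K. norm w0 ^ 2 \<le> norm v ^ 2"
    using continuous_attains_inf[OF K(1) K(3)] by blast
  hence "\<exists>w. w \<in> K \<and> (\<forall>v\<in>K. norm (w - 0) ^ 2 \<le> norm (v - 0) ^ 2)" by auto
  hence P: "proj K 0 \<in> K \<and> (\<forall>v\<in>K. norm (proj K 0 - 0) ^ 2 \<le> norm (v - 0) ^ 2)"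
    unfolding proj_def by (rule someI_ex)
  define w where "w = proj K 0"
  have wK: "w \<in> K" and wmin: "\<And>v. v \<in> K \<Longrightarrow> norm w ^ 2 \<le> norm v ^ 2" using P by (auto simp: w_def)
  have "w \<bullet> (k - w) \<ge> 0" if k: "k \<in> K" for k
  proof (rule ccontr)
    assume "\<not> ?thesis"
    hence a: "w \<bullet> (k - w) < 0" by simp
    define A where "A = w \<bullet> (k - w)"
    define B where "B = norm (k - w) ^ 2"
    have "k \<noteq> w" using a by auto
    hence B0: "B > 0" by (simp add: B_def)
    define \<theta> where "\<theta> = min 1 (- A / B)"
    have th: "0 \<le> \<theta>" "\<theta> \<le> 1" using a B0 by (auto simp: \<theta>_def A_def divide_nonpos_pos less_imp_le)
    have "w + \<theta> *\<^sub>R (k - w) = (1 - \<theta>) *\<^sub>R w + \<theta> *\<^sub>R k" by (simp add: algebra_simps)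
    also have "\<dots> \<in> K" using K(2) wK k th by (intro convexD) auto
    finally have "norm w ^ 2 \<le> norm (w + \<theta> *\<^sub>R (k - w)) ^ 2" using wmin by blast
    also have "\<dots> = (w + \<theta> *\<^sub>R (k - w)) \<bullet> (w + \<theta> *\<^sub>R (k - w))"
      by (rule power2_norm_eq_inner)
    also have "\<dots> = w \<bullet> w + 2 * \<theta> * (w \<bullet> (k - w)) + \<theta>^2 * ((k - w) \<bullet> (k - w))"
      by (simp only: inner_add_left inner_add_right inner_scaleR_left inner_scaleR_right)
         (simp add: inner_commute[of "k - w" w] power2_eq_square algebra_simps inner_diff_left inner_diff_right inner_commute)
    also have "\<dots> = norm w ^ 2 + 2 * \<theta> * A + \<theta>^2 * B"
      by (simp add: A_def B_def power2_norm_eq_inner)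
    finally have ineq: "0 \<le> \<theta> * (2 * A + \<theta> * B)" by (simp add: algebra_simps power2_eq_square)
    have "\<theta> * B \<le> - A" using B0 by (simp add: \<theta>_def min_def field_simps split: if_splits)
    hence "2 * A + \<theta> * B < 0" using a by (simp add: A_def)
    moreover have "\<theta> > 0" using a B0 by (simp add: \<theta>_def A_def divide_neg_pos)
    ultimately have "\<theta> * (2 * A + \<theta> * B) < 0" by (simp add: mult_pos_neg)
    with ineq show False by simp
  qed
  thus ?thesis using wK by (auto simp: w_def)
qed


lemma grad_ineq:
  fixes f :: "'a::real_inner \<Rightarrow> real"
  assumes cf: "convex_on UNIV f" and gd: "GDERIV f y :> G"
  shows "f y + G \<bullet> (z - y) \<le> f z"
proof -
  define \<phi> where "\<phi> \<theta> = f (y + \<theta> *\<^sub>R (z - y))" for \<theta> :: real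
  have c\<phi>: "convex_on UNIV \<phi>"
  proof (rule convex_onI)
    fix t a b :: real assume "t > 0" "t < 1"
    have "y + ((1-t)*a + t*b) *\<^sub>R (z-y) = (1-t) *\<^sub>R (y + a *\<^sub>R (z-y)) + t *\<^sub>R (y + b *\<^sub>R (z-y))"
      by (simp add: algebra_simps)
    then show "\<phi> ((1-t) *\<^sub>R a + t *\<^sub>R b) \<le> (1-t) * \<phi> a + t * \<phi> b"
      using convex_onD[OF cf, of t "y + a *\<^sub>R (z-y)" "y + b *\<^sub>R (z-y)"] \<open>t>0\<close> \<open>t<1\<close>
      by (simp add: \<phi>_def)
  qed simp
  have p: "((\<lambda>\<theta>::real. y + \<theta> *\<^sub>R (z - y)) has_vector_derivative (z - y)) (at 0)"
    by (auto intro!: derivative_eq_intros)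
  have fd: "(f has_derivative (\<lambda>h. h \<bullet> G)) (at ((\<lambda>\<theta>::real. y + \<theta> *\<^sub>R (z - y)) 0) within range (\<lambda>\<theta>::real. y + \<theta> *\<^sub>R (z - y)))"
    using gd unfolding gderiv_def by (auto intro: has_derivative_at_withinI)
  have "((f \<circ> (\<lambda>\<theta>::real. y + \<theta> *\<^sub>R (z - y))) has_vector_derivative (z - y) \<bullet> G) (at 0)"
    using vector_derivative_diff_chain_within[OF p fd] by simp
  hence "(\<phi> has_real_derivative G \<bullet> (z - y)) (at 0)"
    unfolding has_real_derivative_iff_has_vector_derivative
    by (simp add: \<phi>_def[abs_def] o_def inner_commute)
  from convex_on_imp_above_tangent[OF c\<phi> connected_UNIV _ _ this[THEN has_field_derivative_at_within], of 1]
  show ?thesis by (simp add: \<phi>_def)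
qed


theorem theorem4p9:
  fixes m :: nat
    and f :: "nat \<Rightarrow> 'a::{real_inner, complete_space} \<Rightarrow> real"
    and g :: "nat \<Rightarrow> 'a \<Rightarrow> 'a"
    and \<alpha> t0 :: real
    and x0 :: 'a
    and x x' x'' :: "real \<Rightarrow> 'a"
  assumes m: "m \<ge> 1"
    and convex: "\<And>i. i \<in> {1..m} \<Longrightarrow> convex_on UNIV (f i)"
    and grad: "\<And>i z. i \<in> {1..m} \<Longrightarrow> GDERIV (f i) z :> g i z"
    and grad_cont: "\<And>i. i \<in> {1..m} \<Longrightarrow> continuous_on UNIV (g i)"
    and alpha: "\<alpha> > 0" and t0: "t0 > 0"
    \<comment> \<open>x is C^1 on [t0,+\<infinity>) with derivative x'\<close>
    and x_deriv: "\<And>t. t \<ge> t0 \<Longrightarrow> (x has_vector_derivative x' t) (at t within {t0..})"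
    and x'_cont: "continuous_on {t0..} x'"
    \<comment> \<open>x' absolutely continuous on every [t0,T]\<close>
    and x'_ac: "\<And>T. T \<ge> t0 \<Longrightarrow> abs_continuous_on t0 T x'"
    \<comment> \<open>x'' Bochner measurable, x'(t) = x'(t0) + (Bochner) integral of x'' over [t0,t]\<close>
    and x''_meas: "strongly_measurable_on {t0..} x''"
    and x''_norm_int: "\<And>T. T \<ge> t0 \<Longrightarrow> (\<lambda>s. norm (x'' s)) integrable_on {t0..T}"
    and x''_int: "\<And>t. t \<ge> t0 \<Longrightarrow> (x'' has_integral (x' t - x' t0)) {t0..t}"
    and x''_deriv: "AE t in lebesgue. t \<ge> t0 \<longrightarrow> (x' has_vector_derivative x'' t) (at t)"
    \<comment> \<open>the differential inclusion, for almost all t > t0\<close>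
    and eq: "AE t in lebesgue. t > t0 \<longrightarrow>
               (\<alpha> / t) *\<^sub>R x' t + proj ((\<lambda>c. c + x'' t) ` Cset m g (x t)) 0 = 0"
    and init: "x t0 = x0" "x' t0 = 0"
    and bdd_below: "\<And>i. i \<in> {1..m} \<Longrightarrow> \<exists>b. \<forall>z. b \<le> f i z"
    \<comment> \<open>Assumption on the weak Pareto set\<close>
    and pareto_ex: "\<And>y0 z. z \<in> level_set m f (\<lambda>i. f i y0) \<Longrightarrow>
                       \<exists>xs. xs \<in> Pw_level m f (\<lambda>i. f i z)"
    and R_finite: "\<exists>R. \<forall>xs \<in> Pw_level m f (\<lambda>i. f i x0).
                     Inf {norm (z - x0) ^ 2 / 2 | z. \<forall>i\<in>{1..m}. f i z = f i xs} \<le> R"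
  shows "\<forall>i\<in>{1..m}. \<exists>L::real.
           ((\<lambda>t. f i (x t)) \<longlongrightarrow> L) at_top \<and>
           ((\<lambda>t. f i (x t) + norm (x' t) ^ 2 / 2) \<longlongrightarrow> L) at_top"
proof -
  let ?I = "{1..m}"
  define h where "h t = norm (x' t) ^ 2 / 2" for t
  define W where "W i t = f i (x t) + h t" for i t
  have h0: "h t \<ge> 0" for t by (simp add: h_def)
  obtain N where N: "negligible N" and Nprop: "\<And>t. t \<notin> N \<Longrightarrow> t > t0 \<Longrightarrow>
      (\<alpha> / t) *\<^sub>R x' t + proj ((\<lambda>c. c + x'' t) ` Cset m g (x t)) 0 = 0"
    using eq unfolding eventually_ae_filter_negligible by blast
  have N': "negligible (insert t0 N)" using N by simp
  have pw: "\<exists>c \<in> Cset m g (x r). c + x'' r = - ((\<alpha>/r) *\<^sub>R x' r)"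
    "\<And>i. i \<in> ?I \<Longrightarrow> g i (x r) \<bullet> x' r + x' r \<bullet> x'' r \<le> - ((\<alpha>/r) * norm (x' r) ^ 2)"
    if r: "r \<notin> N" "r > t0" for r
  proof -
    let ?S = "{g i (x r) | i. i \<in> ?I}"
    let ?K = "(\<lambda>c. c + x'' r) ` Cset m g (x r)"
    have fin: "finite ?S" by simp
    have ne: "?S \<noteq> {}" using m by auto
    have cK: "compact ?K" unfolding Cset_def
      by (intro compact_continuous_image continuous_intros finite_imp_compact_convex_hull fin)
    have "?K = (+) (x'' r) ` Cset m g (x r)" by (auto simp: add.commute)
    hence vK: "convex ?K" unfolding Cset_def by (simp add: convex_translation)
    have neK: "?K \<noteq> {}" using ne by (simp add: Cset_def)
    define p where "p = proj ?K 0"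
    have pK: "p \<in> ?K" and pvar: "\<And>k. k \<in> ?K \<Longrightarrow> p \<bullet> (k - p) \<ge> 0"
      using proj_char[OF cK vK neK] by (auto simp: p_def)
    have peq: "p = - ((\<alpha>/r) *\<^sub>R x' r)" using Nprop[OF r] unfolding p_def
      by (simp add: add_eq_0_iff)
    from pK show "\<exists>c \<in> Cset m g (x r). c + x'' r = - ((\<alpha>/r) *\<^sub>R x' r)" using peq by auto
    fix i assume i: "i \<in> ?I"
    have "g i (x r) \<in> Cset m g (x r)" unfolding Cset_def using i by (intro hull_inc) auto
    hence kK: "g i (x r) + x'' r \<in> ?K" by auto
    define a where "a = \<alpha> / r"
    have a0: "a > 0" using alpha r t0 by (simp add: a_def)
    define k where "k = g i (x r) + x'' r"
    have "0 \<le> p \<bullet> (k - p)" using pvar kK by (simp add: k_def)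
    also have "\<dots> = - a * (x' r \<bullet> k) - a * a * (x' r \<bullet> x' r)"
      by (simp add: peq a_def inner_diff_right inner_add_right algebra_simps)
    finally have "a * (x' r \<bullet> k) \<le> a * (- a * (x' r \<bullet> x' r))" by (simp add: algebra_simps)
    hence "x' r \<bullet> k \<le> - a * (x' r \<bullet> x' r)" using mult_le_cancel_left_pos[OF a0] by blast
    thus "g i (x r) \<bullet> x' r + x' r \<bullet> x'' r \<le> - ((\<alpha>/r) * norm (x' r) ^ 2)"
      by (simp add: k_def a_def inner_add_right inner_commute power2_norm_eq_inner)
  qed
  have xc: "continuous_on {t0..} x"
    unfolding continuous_on_eq_continuous_within
    using x_deriv has_vector_derivative_continuous by (metis atLeast_iff)
  have x''w: "((\<lambda>r. x'' r \<bullet> w) has_integral ((x' b - x' a) \<bullet> w)) {a..b}"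
    if "t0 \<le> a" "a \<le> b" for a b w
  proof (rule has_integral_sub_from[where s=t0 and t=b and u="\<lambda>\<tau>. x' \<tau> \<bullet> w", simplified inner_diff_left[symmetric]])
    fix \<tau> assume "\<tau> \<in> {t0..b}"
    thus "((\<lambda>r. x'' r \<bullet> w) has_integral ((x' \<tau> - x' t0) \<bullet> w)) {t0..\<tau>}"
      using has_integral_linear[OF x''_int bounded_linear_inner_left, of \<tau> w] by (simp add: o_def)
  qed (use that in auto)
  have x''w': "((\<lambda>r. w \<bullet> x'' r) has_integral (w \<bullet> (x' b - x' a))) {a..b}"
    if "t0 \<le> a" "a \<le> b" for a b w
    using x''w[OF that, of w] by (simp add: inner_commute)
  have x'w: "((\<lambda>r. x' r \<bullet> w) has_integral ((x b - x a) \<bullet> w)) {a..b}" if "t0 \<le> a" "a \<le> b" for a b w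
    unfolding inner_diff_left
    by (rule fundamental_theorem_of_calculus[OF that(2)])
      (use that in \<open>auto intro!: bounded_linear.has_vector_derivative[OF bounded_linear_inner_left]
           has_vector_derivative_within_subset[OF x_deriv]\<close>)
  have x''n: "(\<lambda>r. norm (x'' r)) integrable_on {s..t}" if "t0 \<le> s" for s t
  proof (cases "s \<le> t")
    case True thus ?thesis using integrable_subinterval_real[OF x''_norm_int[of t]] that by auto
  next
    case False thus ?thesis by (simp add: integrable_on_empty)
  qed
  have fxd: "((\<lambda>r. f i (x r)) has_vector_derivative (g i (x r) \<bullet> x' r)) (at r within {t0..})"
    if "i \<in> ?I" "r \<ge> t0" for i r
  proof -
    have "(f i has_derivative (\<lambda>h. h \<bullet> g i (x r))) (at (x r) within x ` {t0..})"
      using grad[OF that(1), of "x r"] unfolding gderiv_def by (auto intro: has_derivative_at_withinI)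
    from vector_derivative_diff_chain_within[OF x_deriv[OF that(2)] this]
    show ?thesis by (simp add: o_def inner_commute)
  qed
  have A: "W i t + \<alpha> * integral {s..t} (\<lambda>r. norm (x' r) ^ 2 / r) \<le> W i s"
    if i: "i \<in> ?I" and st: "t0 \<le> s" "s \<le> t" for i s t
  proof -
    have "(\<lambda>r. f i (x r)) t + x' t \<bullet> ((1/2) *\<^sub>R x' t) - ((\<lambda>r. f i (x r)) s + x' s \<bullet> ((1/2) *\<^sub>R x' s))
        \<le> integral {s..t} (\<lambda>r. - (\<alpha> * (norm (x' r) ^ 2 / r)))"
    proof (rule prod_ineq[where U = x'' and V = "\<lambda>r. (1/2) *\<^sub>R x'' r" and
          E = "\<lambda>r. g i (x r) \<bullet> x' r" and N = "insert t0 N"])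
      show "s \<le> t" by fact
      show "continuous_on {s..t} x'" using x'_cont by (rule continuous_on_subset) (use st in auto)
      thus "continuous_on {s..t} (\<lambda>r. (1/2) *\<^sub>R x' r)" by (intro continuous_intros)
      fix a b assume ab: "s \<le> a" "a \<le> b" "b \<le> t"
      fix w
      show "((\<lambda>r. x'' r \<bullet> w) has_integral ((x' b - x' a) \<bullet> w)) {a..b}" using x''w ab st by auto
      show "((\<lambda>r. w \<bullet> (1/2) *\<^sub>R x'' r) has_integral (w \<bullet> ((1/2) *\<^sub>R x' b - (1/2) *\<^sub>R x' a))) {a..b}"
        using has_integral_mult_right[OF x''w'[of a b w], of "1/2"] ab st by (simp add: inner_diff_right diff_divide_distrib)
      show "((\<lambda>r. g i (x r) \<bullet> x' r) has_integral (f i (x b) - f i (x a))) {a..b}"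
        by (rule fundamental_theorem_of_calculus[OF ab(2)])
          (use ab st in \<open>auto intro!: has_vector_derivative_within_subset[OF fxd[OF i]]\<close>)
    next
      show "(\<lambda>r. norm (x'' r)) integrable_on {s..t}" using x''n st by auto
      show "(\<lambda>r. norm ((1/2) *\<^sub>R x'' r)) integrable_on {s..t}"
        using integrable_cmul[OF x''n[of s t], of "1/2"] st by simp
      have "continuous_on {s..t} (\<lambda>r. - (\<alpha> * (norm (x' r) ^ 2 / r)))"
        using st t0 by (intro continuous_intros continuous_on_subset[OF x'_cont]) auto
      thus "(\<lambda>r. - (\<alpha> * (norm (x' r) ^ 2 / r))) integrable_on {s..t}"
        by (rule integrable_continuous_interval)
      show "negligible (insert t0 N)" by fact
    next
      fix r assume r: "r \<in> {s..t}" "r \<notin> insert t0 N"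
      hence "r \<notin> N" "r > t0" using st by auto
      from pw(2)[OF this i]
      show "g i (x r) \<bullet> x' r + x'' r \<bullet> (1/2) *\<^sub>R x' r + x' r \<bullet> (1/2) *\<^sub>R x'' r
            \<le> - (\<alpha> * (norm (x' r) ^ 2 / r))"
        by (simp add: inner_commute[of "x'' r"])
    qed
    thus ?thesis
      by (simp only: integral_neg integral_mult_right) (simp add: W_def h_def power2_norm_eq_inner)
  qed
  define J where "J t = integral {t0..t} (\<lambda>r. norm (x' r) ^ 2 / r)" for t
  have qcont: "continuous_on {a..b} (\<lambda>r. norm (x' r) ^ 2 / r)" if "t0 \<le> a" for a b
    using that t0 by (intro continuous_intros continuous_on_subset[OF x'_cont]) auto
  have J0: "J t0 = 0" by (simp add: J_def)
  have Jab: "((\<lambda>r. norm (x' r) ^ 2 / r) has_integral (J b - J a)) {a..b}" if "t0 \<le> a" "a \<le> b" for a b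
  proof (rule has_integral_sub_from[where s=t0 and t=b and u=J])
    fix \<tau> assume "\<tau> \<in> {t0..b}"
    thus "((\<lambda>r. norm (x' r) ^ 2 / r) has_integral (J \<tau> - J t0)) {t0..\<tau>}"
      using integrable_continuous_interval[OF qcont[of t0 \<tau>]] J0 by (simp add: J_def integrable_integral)
  qed (use that in auto)
  have Jmono: "J a \<le> J b" if "t0 \<le> a" "a \<le> b" for a b
  proof -
    have "0 \<le> J b - J a" by (rule has_integral_nonneg[OF Jab[OF that]]) (use that t0 in auto)
    thus ?thesis by simp
  qed
  have A': "W i t + \<alpha> * (J t - J s) \<le> W i s" if "i \<in> ?I" "t0 \<le> s" "s \<le> t" for i s t
    using A[OF that] integral_unique[OF Jab[OF that(2,3)]] by simp
  have Wdec: "W i t \<le> W i s" if "i \<in> ?I" "t0 \<le> s" "s \<le> t" for i s t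
  proof -
    have "0 \<le> \<alpha> * (J t - J s)" using Jmono[OF that(2,3)] alpha by simp
    thus ?thesis using A'[OF that] by linarith
  qed
  obtain bb where bb: "\<And>i z. i \<in> ?I \<Longrightarrow> bb i \<le> f i z" using bdd_below by metis
  have Wlow: "bb i \<le> W i t" if "i \<in> ?I" for i t using bb[OF that, of "x t"] h0[of t] by (simp add: W_def)
  define Winf where "Winf i = Inf (W i ` {t0..})" for i
  have bddW: "bdd_below (W i ` {t0..})" if "i \<in> ?I" for i
    using Wlow[OF that] by (metis bdd_belowI2)
  have Wge: "Winf i \<le> W i t" if "i \<in> ?I" "t0 \<le> t" for i t
    unfolding Winf_def using bddW[OF that(1)] that(2) by (auto intro: cInf_lower)
  have Wconv: "(W i \<longlongrightarrow> Winf i) at_top" if i: "i \<in> ?I" for i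
  proof (rule order_tendstoI)
    fix a assume "a < Winf i"
    thus "eventually (\<lambda>t. a < W i t) at_top" using Wge[OF i] unfolding eventually_at_top_linorder
      by (intro exI[of _ t0]) (auto intro: less_le_trans)
  next
    fix a assume "Winf i < a"
    then obtain t1 where t1: "t1 \<in> {t0..}" "W i t1 < a"
      using cInf_less_iff[of "W i ` {t0..}" a] bddW[OF i] unfolding Winf_def by auto
    show "eventually (\<lambda>t. W i t < a) at_top" unfolding eventually_at_top_linorder
      using Wdec[OF i] t1 by (intro exI[of _ t1]) (auto intro: le_less_trans)
  qed
  have one: "1 \<in> ?I" using m by simp
  have Jbd: "J t \<le> (W 1 t0 - bb 1) / \<alpha>" if "t0 \<le> t" for t
  proof -
    have "W 1 t + \<alpha> * (J t - J t0) \<le> W 1 t0" using A'[OF one order_refl that] .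
    moreover have "bb 1 \<le> W 1 t" using Wlow[OF one] .
    ultimately have "\<alpha> * J t \<le> W 1 t0 - bb 1" using J0 by simp
    thus ?thesis using alpha by (simp add: pos_le_divide_eq mult.commute)
  qed
  have hlim: "(h \<longlongrightarrow> 0) at_top"
  proof (rule ccontr)
    assume nh: "\<not> ?thesis"
    obtain \<delta> where \<delta>: "\<delta> > 0" and freq: "\<And>T. \<exists>t\<ge>T. \<delta> \<le> h t"
    proof -
      from nh obtain e where e: "e > 0" "\<not> eventually (\<lambda>t. dist (h t) 0 < e) at_top"
        unfolding tendsto_iff by blast
      hence "\<forall>T. \<exists>t\<ge>T. e \<le> h t" unfolding eventually_at_top_linorder using h0
        by (auto simp: not_less dist_real_def)
      thus ?thesis using that e by blast
    qed
    define d where "d = \<delta> / 2"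
    have d0: "d > 0" using \<delta> by (simp add: d_def)
    have "eventually (\<lambda>t. \<forall>i\<in>?I. W i t < Winf i + d) at_top"
    proof (rule eventually_ball_finite)
      show "\<forall>i\<in>?I. \<forall>\<^sub>F t in at_top. W i t < Winf i + d"
      proof
        fix i assume i: "i \<in> ?I"
        show "\<forall>\<^sub>F t in at_top. W i t < Winf i + d"
          by (rule order_tendstoD(2)[OF Wconv[OF i]]) (use d0 in simp)
      qed
    qed simp
    then obtain T1 where T1: "\<And>t i. t \<ge> T1 \<Longrightarrow> i \<in> ?I \<Longrightarrow> W i t < Winf i + d"
      unfolding eventually_at_top_linorder by blast
    obtain t1 where t1: "t1 \<ge> max T1 t0" "\<delta> \<le> h t1" using freq by blast
    define z where "z = x t1"
    have fz: "f i z < Winf i - d" if "i \<in> ?I" for i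
      using T1[of t1 i] t1 that by (simp add: W_def z_def d_def)
    have lowc: "d - h r \<le> (x r - z) \<bullet> c" if "t0 \<le> r" "c \<in> Cset m g (x r)" for r c
    proof -
      have "Cset m g (x r) \<subseteq> {c. d - h r \<le> (x r - z) \<bullet> c}"
        unfolding Cset_def
      proof (rule hull_minimal)
        show "convex {c. d - h r \<le> (x r - z) \<bullet> c}" by (rule convex_halfspace_ge)
        show "{g i (x r) |i. i \<in> ?I} \<subseteq> {c. d - h r \<le> (x r - z) \<bullet> c}"
        proof clarify
          fix i assume i: "i \<in> ?I"
          have "f i (x r) + g i (x r) \<bullet> (z - x r) \<le> f i z" by (rule grad_ineq[OF convex[OF i] grad[OF i]])
          moreover have "Winf i - h r \<le> f i (x r)" using Wge[OF i that(1)] by (simp add: W_def)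
          moreover note fz[OF i]
          moreover have "(x r - z) \<bullet> g i (x r) = - (g i (x r) \<bullet> (z - x r))"
            by (simp add: inner_commute inner_diff_right inner_diff_left)
          ultimately show "d - h r \<le> (x r - z) \<bullet> g i (x r)" by linarith
        qed
      qed
      thus ?thesis using that(2) by blast
    qed
    define \<psi> where "\<psi> r = (r powr \<alpha>) *\<^sub>R (x r - z)" for r
    define \<psi>' where "\<psi>' r = (\<alpha> * r powr (\<alpha> - 1)) *\<^sub>R (x r - z) + (r powr \<alpha>) *\<^sub>R x' r" for r
    have \<psi>d: "(\<psi> has_vector_derivative \<psi>' r) (at r within {t0..})" if "t0 \<le> r" for r
    proof -
      have r0: "r > 0" using that t0 by simp
      have "((\<lambda>r. r powr \<alpha>) has_real_derivative \<alpha> * r powr (\<alpha> - 1)) (at r within {t0..})"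
        using has_real_derivative_powr[OF r0] by (rule has_field_derivative_at_within)
      moreover have "((\<lambda>r. x r - z) has_vector_derivative x' r) (at r within {t0..})"
        using has_vector_derivative_diff[OF x_deriv[OF that] has_vector_derivative_const[of z]] by simp
      ultimately show ?thesis unfolding \<psi>_def[abs_def] \<psi>'_def
        using has_vector_derivative_scaleR by (fastforce simp: add.commute)
    qed
    have \<psi>'c: "continuous_on {a..b} \<psi>'" if "t0 \<le> a" for a b
      unfolding \<psi>'_def[abs_def] using that t0
      by (intro continuous_intros continuous_on_subset[OF x'_cont] continuous_on_subset[OF xc]) auto
    have \<psi>c: "continuous_on {a..b} \<psi>" if "t0 \<le> a" for a b
      unfolding \<psi>_def[abs_def] using that t0
      by (intro continuous_intros continuous_on_subset[OF xc]) auto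
    have B: "\<psi> t \<bullet> x' t - \<psi> T \<bullet> x' T \<le> integral {T..t} (\<lambda>r. r powr \<alpha> * (3 * h r - d))"
      if T: "t0 \<le> T" "T \<le> t" for T t
    proof -
      have "(\<lambda>r. 0) t + \<psi> t \<bullet> x' t - ((\<lambda>r. 0) T + \<psi> T \<bullet> x' T)
          \<le> integral {T..t} (\<lambda>r. r powr \<alpha> * (3 * h r - d))"
      proof (rule prod_ineq[where U = \<psi>' and V = x'' and E = "\<lambda>r. 0" and N = "insert t0 N"])
        show "T \<le> t" by fact
        show "continuous_on {T..t} \<psi>" using \<psi>c T by auto
        show "continuous_on {T..t} x'" using x'_cont by (rule continuous_on_subset) (use T in auto)
        fix a b w assume ab: "T \<le> a" "a \<le> b" "b \<le> t"
        show "((\<lambda>r. \<psi>' r \<bullet> w) has_integral ((\<psi> b - \<psi> a) \<bullet> w)) {a..b}"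
          unfolding inner_diff_left
          by (rule fundamental_theorem_of_calculus[OF ab(2)])
            (use ab T in \<open>auto intro!: bounded_linear.has_vector_derivative[OF bounded_linear_inner_left]
               has_vector_derivative_within_subset[OF \<psi>d]\<close>)
        show "((\<lambda>r. w \<bullet> x'' r) has_integral (w \<bullet> (x' b - x' a))) {a..b}" using x''w' ab T by auto
        show "((\<lambda>r. 0) has_integral (0 - 0)) {a..b}" by simp
      next
        show "(\<lambda>r. norm (\<psi>' r)) integrable_on {T..t}"
          using T by (intro integrable_continuous_interval continuous_on_norm \<psi>'c)
        show "(\<lambda>r. norm (x'' r)) integrable_on {T..t}" using x''n T by auto
        show "(\<lambda>r. r powr \<alpha> * (3 * h r - d)) integrable_on {T..t}"
          using T t0 unfolding h_def
          by (intro integrable_continuous_interval continuous_intros continuous_on_subset[OF x'_cont]) auto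
        show "negligible (insert t0 N)" by fact
      next
        fix r assume r: "r \<in> {T..t}" "r \<notin> insert t0 N"
        hence rN: "r \<notin> N" "r > t0" using T by auto
        hence r0: "r > 0" using t0 by simp
        obtain c where c: "c \<in> Cset m g (x r)" "c + x'' r = - ((\<alpha>/r) *\<^sub>R x' r)" using pw(1)[OF rN] by blast
        have x''eq: "x'' r = - ((\<alpha>/r) *\<^sub>R x' r) - c" using c(2) by (simp add: algebra_simps)
        have C: "d - h r \<le> (x r - z) \<bullet> c" using lowc[OF _ c(1)] rN by simp
        define P where "P = (x r - z) \<bullet> x' r"
        define C' where "C' = (x r - z) \<bullet> c"
        have pa: "r powr (\<alpha> - 1) = r powr \<alpha> / r" using r0 by (simp add: powr_diff)
        have e1: "\<psi>' r \<bullet> x' r = \<alpha> * (r powr \<alpha> / r) * P + r powr \<alpha> * (2 * h r)"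
          by (simp add: \<psi>'_def P_def h_def pa inner_add_left power2_norm_eq_inner)
        have e2: "\<psi> r \<bullet> x'' r = r powr \<alpha> * (-(\<alpha> / r) * P - C')"
          by (simp add: \<psi>_def x''eq P_def C'_def inner_diff_right algebra_simps)
        have "0 + \<psi>' r \<bullet> x' r + \<psi> r \<bullet> x'' r = r powr \<alpha> * (2 * h r - C')"
          using e1 e2 by (simp add: algebra_simps)
        also have "\<dots> \<le> r powr \<alpha> * (3 * h r - d)" using C by (intro mult_left_mono) (auto simp: C'_def)
        finally show "0 + \<psi>' r \<bullet> x' r + \<psi> r \<bullet> x'' r \<le> r powr \<alpha> * (3 * h r - d)" .
      qed
      thus ?thesis by simp
    qed
    define \<eta> where "\<eta> = d / (3 * (\<alpha> + 1))"
    have \<eta>0: "\<eta> > 0" using d0 alpha by (simp add: \<eta>_def)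
    have bddJ: "bdd_above (J ` {t0..})" using Jbd by (metis bdd_aboveI2 atLeast_iff)
    have "Sup (J ` {t0..}) - \<eta> < Sup (J ` {t0..})" using \<eta>0 by simp
    then obtain T where T: "t0 \<le> T" "Sup (J ` {t0..}) - \<eta> < J T"
      using less_cSup_iff[of "J ` {t0..}" "Sup (J ` {t0..}) - \<eta>"] bddJ by auto
    have Jclose: "J t - J T \<le> \<eta>" if "T \<le> t" for t
    proof -
      have "J t \<le> Sup (J ` {t0..})" using that T by (intro cSup_upper[OF _ bddJ]) auto
      thus ?thesis using T by simp
    qed
    have T0: "T > 0" using T t0 by simp
    define \<kappa> where "\<kappa> = d / (2 * (\<alpha> + 1))"
    have \<kappa>0: "\<kappa> > 0" using d0 alpha by (simp add: \<kappa>_def)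
    define C0 where "C0 = \<psi> T \<bullet> x' T + d * T powr (\<alpha> + 1) / (\<alpha> + 1)"
    have bound: "\<psi> t \<bullet> x' t \<le> C0 - \<kappa> * t powr (\<alpha> + 1)" if t: "T \<le> t" for t
    proof -
      have intpow: "((\<lambda>r. r powr \<alpha>) has_integral (t powr (\<alpha>+1) / (\<alpha>+1) - T powr (\<alpha>+1) / (\<alpha>+1))) {T..t}"
      proof (rule fundamental_theorem_of_calculus[OF t])
        fix r assume r: "r \<in> {T..t}"
        hence r0: "r > 0" using T0 by simp
        have "((\<lambda>r. r powr (\<alpha>+1) / (\<alpha>+1)) has_real_derivative ((\<alpha>+1) * r powr (\<alpha>+1-1)) / (\<alpha>+1)) (at r within {T..t})"
          using DERIV_cdivide[OF has_field_derivative_at_within[OF has_real_derivative_powr[OF r0]], of "\<alpha>+1" "\<alpha>+1" "{T..t}"] .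
        moreover have "((\<alpha>+1) * r powr (\<alpha>+1-1)) / (\<alpha>+1) = r powr \<alpha>" using alpha by simp
        ultimately show "((\<lambda>r. r powr (\<alpha>+1) / (\<alpha>+1)) has_vector_derivative r powr \<alpha>) (at r within {T..t})"
          by (simp add: has_real_derivative_iff_has_vector_derivative)
      qed
      have cI1: "continuous_on {T..t} (\<lambda>r. r powr \<alpha> * (3 * h r - d))"
        using T t0 unfolding h_def
        by (intro continuous_intros continuous_on_subset[OF x'_cont]) auto
      have I1: "((\<lambda>r. r powr \<alpha> * (3 * h r - d)) has_integral integral {T..t} (\<lambda>r. r powr \<alpha> * (3 * h r - d))) {T..t}"
        using integrable_continuous_interval[OF cI1] by (rule integrable_integral)
      have I2: "((\<lambda>r. (3/2) * t powr (\<alpha>+1) * (norm (x' r) ^ 2 / r) - d * r powr \<alpha>) has_integral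
          ((3/2) * t powr (\<alpha>+1) * (J t - J T) - d * (t powr (\<alpha>+1) / (\<alpha>+1) - T powr (\<alpha>+1) / (\<alpha>+1)))) {T..t}"
        by (intro has_integral_diff has_integral_mult_right Jab T t intpow)
      have "integral {T..t} (\<lambda>r. r powr \<alpha> * (3 * h r - d))
          \<le> (3/2) * t powr (\<alpha>+1) * (J t - J T) - d * (t powr (\<alpha>+1) / (\<alpha>+1) - T powr (\<alpha>+1) / (\<alpha>+1))"
      proof (rule has_integral_le[OF I1 I2])
        fix r assume r: "r \<in> {T..t}"
        hence r0: "r > 0" using T0 by simp
        have "r powr \<alpha> * r = r powr (\<alpha> + 1)" using r0 by (simp add: powr_add)
        also have "\<dots> \<le> t powr (\<alpha> + 1)" using r0 r alpha by (intro powr_mono2) auto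
        finally have "r powr \<alpha> \<le> t powr (\<alpha> + 1) / r" using r0 by (simp add: pos_le_divide_eq)
        hence "r powr \<alpha> * (3/2 * norm (x' r) ^ 2) \<le> t powr (\<alpha> + 1) / r * (3/2 * norm (x' r) ^ 2)"
          by (intro mult_right_mono) auto
        thus "r powr \<alpha> * (3 * h r - d) \<le> (3/2) * t powr (\<alpha>+1) * (norm (x' r) ^ 2 / r) - d * r powr \<alpha>"
          by (simp add: h_def algebra_simps)
      qed
      also have "\<dots> \<le> (3/2) * t powr (\<alpha>+1) * \<eta> - d * (t powr (\<alpha>+1) / (\<alpha>+1) - T powr (\<alpha>+1) / (\<alpha>+1))"
        using mult_left_mono[OF Jclose[OF t], of "t powr (\<alpha>+1)"] by (simp add: mult.commute)
      finally have "\<psi> t \<bullet> x' t - \<psi> T \<bullet> x' T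
          \<le> (3/2) * t powr (\<alpha>+1) * \<eta> - d * (t powr (\<alpha>+1) / (\<alpha>+1) - T powr (\<alpha>+1) / (\<alpha>+1))"
        using B[OF T(1) t] by linarith
      moreover have "d * t powr (\<alpha>+1) / (\<alpha>+1) = 2 * (\<kappa> * t powr (\<alpha>+1))"
        using alpha by (simp add: \<kappa>_def field_simps)
      moreover have "(3/2) * t powr (\<alpha>+1) * \<eta> = \<kappa> * t powr (\<alpha>+1)"
        using alpha by (simp add: \<eta>_def \<kappa>_def field_simps)
      moreover have "d * (t powr (\<alpha>+1) / (\<alpha>+1) - T powr (\<alpha>+1) / (\<alpha>+1))
          = d * t powr (\<alpha>+1) / (\<alpha>+1) - d * T powr (\<alpha>+1) / (\<alpha>+1)"
        by (simp add: right_diff_distrib)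
      moreover have ar: "\<And>a b E X P1 P2 K::real. a - b \<le> E - X \<Longrightarrow> P1 = 2 * K \<Longrightarrow> E = K \<Longrightarrow> X = P1 - P2
          \<Longrightarrow> a \<le> b + P2 - K" by linarith
      ultimately show ?thesis unfolding C0_def by blast
    qed
    define T2 where "T2 = max T ((abs C0 / T powr \<alpha> + 1) / \<kappa>)"
    have pneg: "(x t - z) \<bullet> x' t \<le> -1" if "T2 \<le> t" for t
    proof -
      have tT: "T \<le> t" using that by (simp add: T2_def)
      have t0': "t > 0" using tT T0 by simp
      have tp: "t powr \<alpha> > 0" using t0' by simp
      have "t powr \<alpha> * ((x t - z) \<bullet> x' t) \<le> C0 - \<kappa> * (t powr \<alpha> * t)"
        using bound[OF tT] t0' by (simp add: \<psi>_def powr_add)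
      hence "t powr \<alpha> * ((x t - z) \<bullet> x' t) \<le> t powr \<alpha> * (C0 / t powr \<alpha> - \<kappa> * t)"
        using tp by (simp add: algebra_simps)
      hence 1: "(x t - z) \<bullet> x' t \<le> C0 / t powr \<alpha> - \<kappa> * t"
        using tp by (simp add: mult_le_cancel_left_pos)
      have "T powr \<alpha> \<le> t powr \<alpha>" using tT T0 alpha by (intro powr_mono2) auto
      hence "abs C0 / t powr \<alpha> \<le> abs C0 / T powr \<alpha>" using T0 tp by (intro divide_left_mono) auto
      moreover have "C0 / t powr \<alpha> \<le> abs C0 / t powr \<alpha>" using tp by (intro divide_right_mono) auto
      moreover have "(abs C0 / T powr \<alpha> + 1) / \<kappa> \<le> t" using that by (simp add: T2_def)
      hence "abs C0 / T powr \<alpha> + 1 \<le> \<kappa> * t" using \<kappa>0 by (simp add: pos_divide_le_eq mult.commute)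
      ultimately show ?thesis using 1 by linarith
    qed
    have T2: "t0 \<le> T2" using T by (simp add: T2_def)
    define \<phi> where "\<phi> t = (x t - z) \<bullet> ((1/2) *\<^sub>R (x t - z))" for t
    have \<phi>0: "\<phi> t \<ge> 0" for t by (simp add: \<phi>_def)
    have \<phi>dec: "\<phi> t - \<phi> T2 \<le> integral {T2..t} (\<lambda>r. (x r - z) \<bullet> x' r)" if t: "T2 \<le> t" for t
    proof -
      have "(\<lambda>r. 0) t + (x t - z) \<bullet> ((1/2) *\<^sub>R (x t - z)) - ((\<lambda>r. 0) T2 + (x T2 - z) \<bullet> ((1/2) *\<^sub>R (x T2 - z)))
          \<le> integral {T2..t} (\<lambda>r. (x r - z) \<bullet> x' r)"
      proof (rule prod_ineq[where U = x' and V = "\<lambda>r. (1/2) *\<^sub>R x' r" and E = "\<lambda>r. 0" and N = "{}"])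
        show "T2 \<le> t" by fact
        have "continuous_on {T2..t} x" using xc by (rule continuous_on_subset) (use T2 in auto)
        thus "continuous_on {T2..t} (\<lambda>r. x r - z)" "continuous_on {T2..t} (\<lambda>r. (1/2) *\<^sub>R (x r - z))"
          by (auto intro!: continuous_intros)
        fix a b w assume ab: "T2 \<le> a" "a \<le> b" "b \<le> t"
        show "((\<lambda>r. x' r \<bullet> w) has_integral ((x b - z - (x a - z)) \<bullet> w)) {a..b}"
          using x'w[of a b w] ab T2 by simp
        show "((\<lambda>r. w \<bullet> (1/2) *\<^sub>R x' r) has_integral (w \<bullet> ((1/2) *\<^sub>R (x b - z) - (1/2) *\<^sub>R (x a - z)))) {a..b}"
          using has_integral_mult_right[OF x'w[of a b w], of "1/2"] ab T2
          by (simp add: inner_commute inner_diff_right inner_diff_left algebra_simps)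
        show "((\<lambda>r. 0) has_integral (0 - 0)) {a..b}" by simp
      next
        have "continuous_on {T2..t} x'" using x'_cont by (rule continuous_on_subset) (use T2 in auto)
        thus "(\<lambda>r. norm (x' r)) integrable_on {T2..t}" "(\<lambda>r. norm ((1/2) *\<^sub>R x' r)) integrable_on {T2..t}"
          by (auto intro!: integrable_continuous_interval continuous_intros)
        have "continuous_on {T2..t} x" using xc by (rule continuous_on_subset) (use T2 in auto)
        with \<open>continuous_on {T2..t} x'\<close> show "(\<lambda>r. (x r - z) \<bullet> x' r) integrable_on {T2..t}"
          by (auto intro!: integrable_continuous_interval continuous_intros)
      next
        fix r
        show "0 + x' r \<bullet> (1/2) *\<^sub>R (x r - z) + (x r - z) \<bullet> (1/2) *\<^sub>R x' r \<le> (x r - z) \<bullet> x' r"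
          by (simp add: inner_commute)
      qed simp
      thus ?thesis by (simp add: \<phi>_def)
    qed
    define t where "t = T2 + \<phi> T2 + 1"
    have tT2: "T2 \<le> t" using \<phi>0[of T2] by (simp add: t_def)
    have cp: "continuous_on {T2..t} (\<lambda>r. (x r - z) \<bullet> x' r)"
      using T2 by (intro continuous_intros continuous_on_subset[OF xc] continuous_on_subset[OF x'_cont]) auto
    have "integral {T2..t} (\<lambda>r. (x r - z) \<bullet> x' r) \<le> integral {T2..t} (\<lambda>r. -1 :: real)"
      by (rule integral_le[OF integrable_continuous_interval[OF cp]]) (use pneg in auto)
    also have "\<dots> = - (t - T2)" using tT2 by simp
    finally have "\<phi> t - \<phi> T2 \<le> - (t - T2)" using \<phi>dec[OF tT2] by linarith
    hence "\<phi> t \<le> -1" by (simp add: t_def)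
    with \<phi>0[of t] show False by simp
  qed
  show ?thesis
  proof
    fix i assume i: "i \<in> ?I"
    have "((\<lambda>t. W i t - h t) \<longlongrightarrow> Winf i - 0) at_top" by (intro tendsto_diff Wconv[OF i] hlim)
    hence "((\<lambda>t. f i (x t)) \<longlongrightarrow> Winf i) at_top" by (simp add: W_def)
    moreover have "((\<lambda>t. f i (x t) + norm (x' t) ^ 2 / 2) \<longlongrightarrow> Winf i) at_top"
      using Wconv[OF i] by (simp add: W_def[abs_def] h_def)
    ultimately show "\<exists>L::real. ((\<lambda>t. f i (x t)) \<longlongrightarrow> L) at_top \<and>
           ((\<lambda>t. f i (x t) + norm (x' t) ^ 2 / 2) \<longlongrightarrow> L) at_top" by blast
  qed
qed

end
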